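(* Let $n\ge 2$ and let $\zeta_1,\dots,\zeta_{n-1}$ be the positive roots of $U'_{2n-1}$. For each $i$, the value $(SU_{2n-1})(\zeta_i)$, viewed as a polynomial in $x$, vanishes exactly at \[ x=\zeta_i^2-\frac{2}{(2n+1)(2n-1)}. \] Consequently the roots of the Jeff polynomial $J(x)$ are exactly the $n-1$ real numbers $\zeta_i^2-\frac{2}{(2n-1)(2n+1)}$, $i=1,\dots,n-1$.
   Context: $T_m,U_m$ are Chebyshev polynomials: $T_m(\cos\theta)=\cos m\theta$, $U_m(\cos\theta)=\sin((m+1)\theta)/\sin\theta$. For an indeterminate $x$, \[ (SU_{2n-1})(z)=\frac12\int_{-z}^{z}U'_{2n-1}(t)(x-t^2)\,dt=(x-z^2)U_{2n-1}(z)+\frac{T_{2n+1}(z)}{2n+1}+\frac{T_{2n-1}(z)}{2n-1}. \] The Jeff polynomial $J(x)\in\mathbb{Z}[x]$ is the (up to sign unique) integer polynomial with coprime coefficients that is a nonzero real scalar multiple of $\prod_{i=1}^{n-1}(SU_{2n-1})(\zeta_i)$. *)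

theory Defs
  imports "HOL-Computational_Algebra.Polynomial_Factorial"
begin

text \<open>Chebyshev polynomials of the first and second kind, as real polynomials,
  via the standard three-term recurrence (equivalent to
  T_m(cos t) = cos (m t), U_m(cos t) = sin((m+1)t)/sin t).\<close>

fun cheb_T :: "nat \<Rightarrow> real poly" where
  "cheb_T 0 = 1"
| "cheb_T (Suc 0) = [:0, 1:]"
| "cheb_T (Suc (Suc m)) = [:0, 2:] * cheb_T (Suc m) - cheb_T m"

fun cheb_U :: "nat \<Rightarrow> real poly" where
  "cheb_U 0 = 1"
| "cheb_U (Suc 0) = [:0, 2:]"
| "cheb_U (Suc (Suc m)) = [:0, 2:] * cheb_U (Suc m) - cheb_U m"

definition SU :: "nat \<Rightarrow> real \<Rightarrow> real poly" where
  "SU n z = smult (poly (cheb_U (2*n - 1)) z) [:- (z^2), 1:]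
            + [: poly (cheb_T (2*n + 1)) z / real (2*n + 1)
                 + poly (cheb_T (2*n - 1)) z / real (2*n - 1) :]"

definition zetas :: "nat \<Rightarrow> real set" where
  "zetas n = {z. z > 0 \<and> poly (pderiv (cheb_U (2*n - 1))) z = 0}"

definition is_jeff :: "nat \<Rightarrow> int poly \<Rightarrow> bool" where
  "is_jeff n J \<longleftrightarrow> content J = 1 \<and>
     (\<exists>c::real. c \<noteq> 0 \<and> map_poly of_int J = smult c (\<Prod>z\<in>zetas n. SU n z))"

end

theory Submission imports Defs begin

lemma polyU_rec: "poly (cheb_U (Suc (Suc m))) z = 2*z*poly (cheb_U (Suc m)) z - poly (cheb_U m) z"
  by simp
lemma polyT_rec: "poly (cheb_T (Suc (Suc m))) z = 2*z*poly (cheb_T (Suc m)) z - poly (cheb_T m) z"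
  by simp
lemma dU_rec: "poly (pderiv (cheb_U (Suc (Suc m)))) z
   = 2*poly (cheb_U (Suc m)) z + 2*z*poly (pderiv (cheb_U (Suc m))) z - poly (pderiv (cheb_U m)) z"
  by (simp add: pderiv_diff pderiv_mult pderiv_pCons pderiv_smult algebra_simps)

lemma I5: "(z^2-1) * poly (cheb_U j) z = z * poly (cheb_T (Suc j)) z - poly (cheb_T j) z"
proof (induction j rule: cheb_U.induct)
  case 1 then show ?case by (simp add: power2_eq_square)
next
  case 2 then show ?case by (simp add: power2_eq_square algebra_simps)
next
  case (3 m)
  have "(z^2-1) * poly (cheb_U (Suc (Suc m))) z = 2*z*((z^2-1) * poly (cheb_U (Suc m)) z) - (z^2-1) * poly (cheb_U m) z"
    by (simp only: polyU_rec) (simp add: algebra_simps)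
  also have "\<dots> = z * poly (cheb_T (Suc (Suc (Suc m)))) z - poly (cheb_T (Suc (Suc m))) z"
    unfolding 3 by (simp only: polyT_rec) (simp add: algebra_simps)
  finally show ?case .
qed

lemma I3: "(z^2-1) * poly (pderiv (cheb_U k)) z = (real k + 1) * poly (cheb_T (Suc k)) z - z * poly (cheb_U k) z"
proof (induction k rule: cheb_U.induct)
  case 1 then show ?case by simp
next
  case 2 then show ?case by (simp add: power2_eq_square algebra_simps pderiv_pCons)
next
  case (3 m)
  have e: "(z^2-1) * poly (cheb_U (Suc m)) z = z * poly (cheb_T (Suc (Suc m))) z - poly (cheb_T (Suc m)) z"
    by (rule I5)
  have "(z^2-1) * poly (pderiv (cheb_U (Suc (Suc m)))) z
      = 2*((z^2-1) * poly (cheb_U (Suc m)) z) + 2*z*((z^2-1)*poly (pderiv (cheb_U (Suc m))) z) - (z^2-1)*poly (pderiv (cheb_U m)) z"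
    by (simp only: dU_rec) (simp add: algebra_simps)
  also have "\<dots> = (real (Suc (Suc m)) + 1) * poly (cheb_T (Suc (Suc (Suc m)))) z - z * poly (cheb_U (Suc (Suc m))) z"
    unfolding e 3(1) 3(2) by (simp only: polyT_rec polyU_rec) (simp add: algebra_simps power2_eq_square)
  finally show ?case .
qed

lemma keyid: "real k * poly (cheb_T (Suc (Suc k))) z + (real k + 2) * poly (cheb_T k) z
   = 2 * poly (cheb_U k) z + 2*z*((z^2-1) * poly (pderiv (cheb_U k)) z)"
proof -
  have a: "poly (cheb_T (Suc (Suc k))) z - poly (cheb_T k) z = 2*((z^2-1) * poly (cheb_U k) z)"
    unfolding I5 by (simp only: polyT_rec) (simp add: algebra_simps)
  show ?thesis unfolding I3 using a by (simp only: polyT_rec) (simp add: algebra_simps power2_eq_square)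
qed

lemma trigU: "poly (cheb_U k) (cos t) * sin t = sin ((real k + 1) * t)"
proof (induction k rule: cheb_U.induct)
  case 1 then show ?case by simp
next
  case 2 then show ?case using sin_double[of t] by (simp add: algebra_simps)
next
  case (3 m)
  have s: "sin ((real m + 3) * t) = 2 * cos t * sin ((real m + 2)*t) - sin ((real m + 1) * t)"
  proof -
    have "sin ((real m + 3) * t) = sin ((real m + 2)*t + t)" by (simp add: algebra_simps)
    moreover have "sin ((real m + 1) * t) = sin ((real m + 2)*t - t)" by (simp add: algebra_simps)
    ultimately show ?thesis by (simp add: sin_add sin_diff)
  qed
  have "poly (cheb_U (Suc (Suc m))) (cos t) * sin t = 2*cos t*(poly (cheb_U (Suc m)) (cos t) * sin t) - poly (cheb_U m) (cos t) * sin t"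
    by (simp only: polyU_rec) (simp add: algebra_simps)
  also have "\<dots> = 2*cos t*sin ((real (Suc m) + 1) * t) - sin ((real m + 1) * t)"
    unfolding 3 by simp
  also have "(real (Suc m) + 1) = real m + 2" by simp
  also have "2*cos t*sin ((real m + 2) * t) - sin ((real m + 1) * t) = sin ((real m + 3) * t)" using s by simp
  also have "real m + 3 = real (Suc (Suc m)) + 1" by simp
  finally show ?case .
qed

lemma degU: "degree (cheb_U k) \<le> k"
proof (induction k rule: cheb_U.induct)
  case (3 m)
  have "degree ([:0,2:] * cheb_U (Suc m)) \<le> Suc (Suc m)"
    using degree_mult_le[of "[:0,2::real:]" "cheb_U (Suc m)"] 3 by auto
  then show ?case using 3 by (simp add: degree_diff_le)
qed auto

definition xr :: "nat \<Rightarrow> nat \<Rightarrow> real" where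
  "xr n j = cos (real j * pi / real (2*n))"

lemma xr_less: assumes "n \<ge> 1" "i < j" "j \<le> 2*n" shows "xr n j < xr n i"
proof -
  have p: "real (2*n) > 0" using assms by simp
  have "real i * pi / real (2*n) < real j * pi / real (2*n)"
    using assms p by (simp add: divide_strict_right_mono)
  moreover have "real j * pi / real (2*n) \<le> pi"
  proof -
    have "real j * pi \<le> real (2*n) * pi" using assms by (intro mult_right_mono) auto
    then show ?thesis using p by (simp add: divide_le_eq mult.commute)
  qed
  ultimately show ?thesis unfolding xr_def by (intro cos_monotone_0_pi) auto
qed

lemma xr_le: assumes "n \<ge> 1" "i \<le> j" "j \<le> 2*n" shows "xr n j \<le> xr n i"
  using xr_less[OF assms(1) _ assms(3), of i] assms(2) by (cases "i = j") auto

lemma xr_half: "n \<ge> 1 \<Longrightarrow> xr n n = 0"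
  unfolding xr_def by simp

lemma U_root: assumes "n \<ge> 1" "1 \<le> j" "j \<le> 2*n-1"
  shows "poly (cheb_U (2*n-1)) (xr n j) = 0"
proof -
  let ?t = "real j * pi / real (2*n)"
  have p: "real (2*n) > 0" using assms by simp
  have "sin ?t > 0"
  proof (rule sin_gt_zero)
    show "0 < ?t" using assms p by simp
    have "real j * pi < real (2*n) * pi" using assms by (intro mult_strict_right_mono) auto
    then show "?t < pi" using p by (simp add: divide_less_eq mult.commute)
  qed
  moreover have "(real (2*n-1) + 1) * ?t = real j * pi" using assms p by (simp add: of_nat_diff)
  ultimately show ?thesis using trigU[of "2*n-1" ?t] unfolding xr_def by simp
qed

lemma U_nz: "cheb_U k \<noteq> 0"
proof
  assume "cheb_U k = 0"
  then have h: "sin ((real k + 1) * (pi / (2*(real k+1)))) = 0" using trigU[of k "pi / (2*(real k+1))"] by simp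
  have eq: "(real k + 1) * (pi / (2*(real k+1))) = pi/2" by (simp add: field_simps)
  from h have "sin (pi/2) = 0" by (subst eq[symmetric])
  then show False by simp
qed

lemma U_roots: assumes "n \<ge> 1"
  shows "{z. poly (cheb_U (2*n-1)) z = 0} = xr n ` {1..2*n-1}"
proof -
  have inj: "inj_on (xr n) {1..2*n-1}"
  proof (rule inj_onI)
    fix a b assume "a \<in> {1..2*n-1}" "b \<in> {1..2*n-1}" "xr n a = xr n b"
    moreover have "a \<le> 2*n" "b \<le> 2*n" using \<open>a \<in> _\<close> \<open>b \<in> _\<close> by auto
    ultimately show "a = b" using xr_less[OF assms, of a b] xr_less[OF assms, of b a]
      by (cases a b rule: linorder_cases) auto
  qed
  have sub: "xr n ` {1..2*n-1} \<subseteq> {z. poly (cheb_U (2*n-1)) z = 0}"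
    using U_root[OF assms] by auto
  have fin: "finite {z. poly (cheb_U (2*n-1)) z = 0}" by (rule poly_roots_finite[OF U_nz])
  have "card {z. poly (cheb_U (2*n-1)) z = 0} \<le> 2*n-1"
    using card_poly_roots_bound[OF U_nz, of "2*n-1"] degU[of "2*n-1"] by linarith
  moreover have "card (xr n ` {1..2*n-1}) = 2*n-1" using card_image[OF inj] by simp
  ultimately show ?thesis using card_subset_eq[OF fin sub] card_mono[OF fin sub] by simp
qed

lemma dU_nz: assumes "n \<ge> 1" shows "pderiv (cheb_U (2*n-1)) \<noteq> 0"
proof
  assume "pderiv (cheb_U (2*n-1)) = 0"
  then have "degree (cheb_U (2*n-1)) = 0" by (simp add: pderiv_eq_0_iff)
  then obtain c where c: "cheb_U (2*n-1) = [:c:]" by (metis degree_eq_zeroE)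
  have "poly (cheb_U (2*n-1)) (xr n 1) = 0" using U_root[OF assms, of 1] assms by simp
  then have "c = 0" using c by simp
  then show False using c U_nz[of "2*n-1"] by simp
qed

lemma rolle_step: assumes "n \<ge> 1" "1 \<le> j" "j \<le> 2*n-2"
  shows "\<exists>y. xr n (Suc j) < y \<and> y < xr n j \<and> poly (pderiv (cheb_U (2*n-1))) y = 0"
proof -
  have lt: "xr n (Suc j) < xr n j" using xr_less[OF assms(1), of j "Suc j"] assms by simp
  have r1: "poly (cheb_U (2*n-1)) (xr n (Suc j)) = 0" using U_root[OF assms(1), of "Suc j"] assms by simp
  have r2: "poly (cheb_U (2*n-1)) (xr n j) = 0" using U_root[OF assms(1), of j] assms by simp
  have c: "continuous_on {xr n (Suc j)..xr n j} (poly (cheb_U (2*n-1)))"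
    by (intro continuous_intros)
  have d: "\<And>x. poly (cheb_U (2*n-1)) differentiable (at x)"
    unfolding real_differentiable_def using poly_DERIV by blast
  obtain y where y: "xr n (Suc j) < y" "y < xr n j" "DERIV (poly (cheb_U (2*n-1))) y :> 0"
    using Rolle[OF lt _ c d] r1 r2 by auto
  have "poly (pderiv (cheb_U (2*n-1))) y = 0"
    using DERIV_unique[OF y(3) poly_DERIV] by simp
  then show ?thesis using y by blast
qed

lemma zeta_struct: assumes n: "n \<ge> 2"
  shows "finite (zetas n) \<and> card (zetas n) = n - 1 \<and> (\<forall>z\<in>zetas n. poly (cheb_U (2*n-1)) z \<noteq> 0)"
proof -
  have n1: "n \<ge> 1" using n by simp
  have "\<forall>j\<in>{1..2*n-2}. \<exists>y. xr n (Suc j) < y \<and> y < xr n j \<and> poly (pderiv (cheb_U (2*n-1))) y = 0"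
    using rolle_step[OF n1] by auto
  then obtain y where y: "\<And>j. j \<in> {1..2*n-2} \<Longrightarrow> xr n (Suc j) < y j \<and> y j < xr n j \<and> poly (pderiv (cheb_U (2*n-1))) (y j) = 0"
    by metis
  have ylt: "y i < y j" if "j < i" "i \<in> {1..2*n-2}" "j \<in> {1..2*n-2}" for i j
  proof -
    have "y i < xr n i" using y[OF that(2)] by simp
    also have "xr n i \<le> xr n (Suc j)" using xr_le[OF n1, of "Suc j" i] that by simp
    also have "xr n (Suc j) < y j" using y[OF that(3)] by simp
    finally show ?thesis .
  qed
  have inj: "inj_on y {1..2*n-2}"
  proof (rule inj_onI)
    fix a b assume ab: "a \<in> {1..2*n-2}" "b \<in> {1..2*n-2}" "y a = y b"
    then show "a = b" using ylt[of a b] ylt[of b a] by (cases a b rule: linorder_cases) auto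
  qed
  let ?R = "{z. poly (pderiv (cheb_U (2*n-1))) z = 0}"
  have sub: "y ` {1..2*n-2} \<subseteq> ?R" using y by auto
  have fin: "finite ?R" by (rule poly_roots_finite[OF dU_nz[OF n1]])
  have "card ?R \<le> 2*n-2"
    using card_poly_roots_bound[OF dU_nz[OF n1]] degU[of "2*n-1"] degree_pderiv[of "cheb_U (2*n-1)"]
    by linarith
  moreover have "card (y ` {1..2*n-2}) = 2*n-2" using card_image[OF inj] by simp
  ultimately have R: "?R = y ` {1..2*n-2}" using card_subset_eq[OF fin sub] card_mono[OF fin sub] by simp
  have Z: "zetas n = y ` {1..n-1}"
  proof
    show "zetas n \<subseteq> y ` {1..n-1}"
    proof
      fix z assume z: "z \<in> zetas n"
      then have "z \<in> ?R" unfolding zetas_def by auto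
      then have "z \<in> y ` {1..2*n-2}" using R by blast
      then obtain j where j: "j \<in> {1..2*n-2}" "z = y j" by blast
      have "j \<le> n - 1"
      proof (rule ccontr)
        assume "\<not> j \<le> n-1"
        then have "xr n j \<le> xr n n" using xr_le[OF n1, of n j] j by simp
        then have "y j < 0" using y[OF j(1)] xr_half[OF n1] by simp
        then show False using z j unfolding zetas_def by auto
      qed
      then show "z \<in> y ` {1..n-1}" using j by auto
    qed
  next
    show "y ` {1..n-1} \<subseteq> zetas n"
    proof
      fix z assume "z \<in> y ` {1..n-1}"
      then obtain j where j: "j \<in> {1..n-1}" "z = y j" by auto
      then have j2: "j \<in> {1..2*n-2}" by auto
      have "xr n n \<le> xr n (Suc j)" using xr_le[OF n1, of "Suc j" n] j by auto
      then have "0 < y j" using y[OF j2] xr_half[OF n1] by simp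
      then show "z \<in> zetas n" using y[OF j2] j unfolding zetas_def by auto
    qed
  qed
  have "inj_on y {1..n-1}" using inj by (rule inj_on_subset) auto
  then have card: "card (zetas n) = n - 1" unfolding Z using card_image by fastforce
  have nz: "poly (cheb_U (2*n-1)) z \<noteq> 0" if zin: "z \<in> zetas n" for z
  proof
    assume "poly (cheb_U (2*n-1)) z = 0"
    then have "z \<in> xr n ` {1..2*n-1}" using U_roots[OF n1] by blast
    then obtain i where i: "i \<in> {1..2*n-1}" "z = xr n i" by blast
    have "z \<in> y ` {1..n-1}" using zin Z by blast
    then obtain j where j: "j \<in> {1..n-1}" "z = y j" by blast
    then have j2: "j \<in> {1..2*n-2}" by auto
    show False
    proof (cases "i \<le> j")
      case True
      then have "xr n j \<le> xr n i" using xr_le[OF n1, of i j] j2 by auto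
      then show False using y[OF j2] i j by simp
    next
      case False
      then have "xr n i \<le> xr n (Suc j)" using xr_le[OF n1, of "Suc j" i] i by simp
      then show False using y[OF j2] i j by simp
    qed
  qed
  show ?thesis using card nz Z by auto
qed

lemma mp_mult: "map_poly (complex_of_real) (p*q) = map_poly of_real p * map_poly of_real q"
  by (rule poly_eqI) (simp add: coeff_map_poly coeff_mult)

lemma mp_smult: "map_poly (complex_of_real) (smult c p) = smult (of_real c) (map_poly of_real p)"
  by (rule poly_eqI) (simp add: coeff_map_poly)

lemma mp_prod: assumes "finite A"
  shows "poly (map_poly complex_of_real (\<Prod>z\<in>A. smult (f z) [:-g z,1:])) w
         = (\<Prod>z\<in>A. of_real (f z) * (w - of_real (g z)))"
  using assms
proof (induction A rule: finite_induct)
  case empty then show ?case by simp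
next
  case (insert a A)
  have h: "map_poly complex_of_real (smult (f a) [:-g a,1:]) = [:- of_real (f a * g a), of_real (f a):]"
    by (simp add: map_poly_pCons)
  have "poly (map_poly complex_of_real (\<Prod>z\<in>insert a A. smult (f z) [:-g z,1:])) w
     = poly (map_poly complex_of_real (smult (f a) [:-g a,1:])) w * poly (map_poly complex_of_real (\<Prod>z\<in>A. smult (f z) [:-g z,1:])) w"
    by (simp only: prod.insert[OF insert(1,2)] mp_mult poly_mult)
  also have "\<dots> = (of_real (f a) * (w - of_real (g a))) * (\<Prod>z\<in>A. of_real (f z) * (w - of_real (g z)))"
    unfolding h insert(3) by (simp add: algebra_simps)
  finally show ?case using insert(1,2) by simp
qed

lemma SU_val: assumes n: "n \<ge> 2" and z: "z \<in> zetas n"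
  shows "SU n z = smult (poly (cheb_U (2*n-1)) z) [:-(z^2 - 2 / ((2 * real n - 1) * (2 * real n + 1))), 1:]"
    and "poly (cheb_U (2*n-1)) z \<noteq> 0"
proof -
  let ?u = "poly (cheb_U (2*n-1)) z"
  show nz: "?u \<noteq> 0" using zeta_struct[OF n] z by auto
  have d: "poly (pderiv (cheb_U (2*n-1))) z = 0" using z unfolding zetas_def by auto
  have k: "Suc (Suc (2*n-1)) = 2*n+1" using n by simp
  have "real (2*n-1) * poly (cheb_T (2*n+1)) z + (real (2*n-1) + 2) * poly (cheb_T (2*n-1)) z = 2 * ?u"
    using keyid[of "2*n-1" z] d k by simp
  moreover have "real (2*n-1) = 2 * real n - 1" using n by (simp add: of_nat_diff)
  ultimately have e: "(2 * real n - 1) * poly (cheb_T (2*n+1)) z + (2 * real n + 1) * poly (cheb_T (2*n-1)) z = 2 * ?u"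
    by (simp add: algebra_simps)
  have p1: "2 * real n - 1 > 0" "2 * real n + 1 > 0" using n by auto
  have F: "poly (cheb_T (2*n + 1)) z / real (2*n + 1) + poly (cheb_T (2*n - 1)) z / real (2*n - 1)
     = ?u * (2 / ((2 * real n - 1) * (2 * real n + 1)))"
    using e p1 \<open>real (2*n-1) = 2 * real n - 1\<close> by (simp add: field_simps)
  show "SU n z = smult ?u [:-(z^2 - 2 / ((2 * real n - 1) * (2 * real n + 1))), 1:]"
    unfolding SU_def F by (simp add: algebra_simps)
qed

theorem mainTheorem3:
  fixes n :: nat and J :: "int poly"
  assumes "n \<ge> 2"
  shows "(\<forall>z\<in>zetas n. {x::real. poly (SU n z) x = 0}
            = {z^2 - 2 / ((2 * real n + 1) * (2 * real n - 1))})
     \<and> (is_jeff n J \<longrightarrow>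
          {w::complex. poly (map_poly of_int J) w = 0}
            = of_real ` ((\<lambda>z. z^2 - 2 / ((2 * real n - 1) * (2 * real n + 1))) ` zetas n)
          \<and> card ((\<lambda>z. z^2 - 2 / ((2 * real n - 1) * (2 * real n + 1))) ` zetas n) = n - 1)"
proof (intro conjI ballI impI)
  define r where "r = (\<lambda>z::real. z^2 - 2 / ((2 * real n - 1) * (2 * real n + 1)))"
  have rr: "2 / ((2 * real n + 1) * (2 * real n - 1)) = 2 / ((2 * real n - 1) * (2 * real n + 1))"
    by (simp add: mult.commute)
  have fin: "finite (zetas n)" and card: "card (zetas n) = n - 1" using zeta_struct[OF assms] by auto
  {
    fix z assume z: "z \<in> zetas n"
    show "{x::real. poly (SU n z) x = 0} = {z^2 - 2 / ((2 * real n + 1) * (2 * real n - 1))}"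
    proof -
      have "\<And>x. poly (SU n z) x = poly (cheb_U (2*n-1)) z * (x - (z^2 - 2 / ((2 * real n - 1) * (2 * real n + 1))))"
        unfolding SU_val(1)[OF assms z] by (simp add: algebra_simps)
      then show ?thesis unfolding rr using SU_val(2)[OF assms z] by auto
    qed
  }
  have inj: "inj_on r (zetas n)"
  proof (rule inj_onI)
    fix a b assume "a \<in> zetas n" "b \<in> zetas n" "r a = r b"
    then have "a > 0" "b > 0" "a^2 = b^2" unfolding zetas_def r_def by auto
    then show "a = b" by (simp add: power2_eq_iff)
  qed
  show "card (r ` zetas n) = n - 1" using card_image[OF inj] card by simp
  assume J: "is_jeff n J"
  then obtain c where c: "c \<noteq> 0" "map_poly of_int J = smult c (\<Prod>z\<in>zetas n. SU n z)"
    unfolding is_jeff_def by auto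
  let ?u = "\<lambda>z. poly (cheb_U (2*n-1)) z"
  have P: "(\<Prod>z\<in>zetas n. SU n z) = (\<Prod>z\<in>zetas n. smult (?u z) [:-r z, 1:])"
    using SU_val(1)[OF assms] unfolding r_def by (intro prod.cong) auto
  have m: "map_poly (of_int :: int \<Rightarrow> complex) J = map_poly complex_of_real (map_poly of_int J)"
    by (simp add: map_poly_map_poly o_def)
  have ev: "poly (map_poly (of_int :: int \<Rightarrow> complex) J) w = of_real c * (\<Prod>z\<in>zetas n. of_real (?u z) * (w - of_real (r z)))" for w
    unfolding m c(2) P mp_smult poly_smult mp_prod[OF fin, of ?u r w] by simp
  show "{w::complex. poly (map_poly of_int J) w = 0} = of_real ` (r ` zetas n)"
  proof -
    have "poly (map_poly (of_int :: int \<Rightarrow> complex) J) w = 0 \<longleftrightarrow> (\<exists>z\<in>zetas n. w = of_real (r z))" for w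
      unfolding ev using c(1) SU_val(2)[OF assms] fin by auto
    then show ?thesis by auto
  qed
qed

end
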